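(* Let $(G,d)$ be a boundedly compact $p$-uniformly convex metric space with $p=c=2$, $f:G\to\mathbb{R}$ proper, convex and lower semicontinuous, $\lambda>0$, and $\tau\in(0,1/2]$. Then the relaxed prox mapping $T_\tau=(1-\tau)\mathrm{Id}\oplus\tau\,\mathrm{prox}^2_{f,\lambda}$ is $\alpha$-firmly nonexpansive on $G$ with constant $\alpha_\tau=1-\tau$, i.e. $d(T_\tau x,T_\tau y)^2\le d(x,y)^2-\frac{\tau}{1-\tau}\psi^{(2,2)}(x,y,T_\tau x,T_\tau y)$ for all $x,y\in G$.
   Context: $(G,d)$ uniquely geodesic with $d(z,(1-\tau)x\oplus\tau y)^2\le(1-\tau)d(z,x)^2+\tau d(z,y)^2-\tau(1-\tau)d(x,y)^2$ for all $\tau\in[0,1]$, $x,y,z$, where $(1-\tau)x\oplus\tau y$ is the point on the geodesic from $x$ to $y$ at distance $\tau d(x,y)$ from $x$; $T_\tau(x)=(1-\tau)x\oplus\tau\,\mathrm{prox}^2_{f,\lambda}(x)$. $f$ convex: $f((1-\tau)x\oplus\tau y)\le(1-\tau)f(x)+\tau f(y)$. $\mathrm{prox}^2_{f,\lambda}(x)=\operatorname{argmin}_y\{f(y)+\frac1{2\lambda}d(y,x)^2\}$. $\psi^{(2,2)}(x,y,u,v)=d(x,u)^2+d(y,v)^2+d(u,v)^2+d(x,y)^2-d(y,u)^2-d(x,v)^2$. *)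

theory Defs
  imports "HOL-Analysis.Analysis"
begin

definition geodesic_path :: "'a::metric_space \<Rightarrow> 'a \<Rightarrow> (real \<Rightarrow> 'a) \<Rightarrow> bool" where
  "geodesic_path x y \<gamma> \<longleftrightarrow> \<gamma> 0 = x \<and> \<gamma> 1 = y \<and>
     (\<forall>s\<in>{0..1}. \<forall>t\<in>{0..1}. dist (\<gamma> s) (\<gamma> t) = \<bar>s - t\<bar> * dist x y)"

definition uniquely_geodesic :: "'a::metric_space itself \<Rightarrow> bool" where
  "uniquely_geodesic _ \<longleftrightarrow> (\<forall>x y::'a. (\<exists>\<gamma>. geodesic_path x y \<gamma>) \<and>
     (\<forall>\<gamma> \<delta>. geodesic_path x y \<gamma> \<and> geodesic_path x y \<delta> \<longrightarrow> (\<forall>t\<in>{0..1}. \<gamma> t = \<delta> t)))"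

text \<open>geod x y t = (1-t) x \<oplus> t y: the point on the geodesic from x to y at distance t d(x,y) from x.\<close>
definition geod :: "'a::metric_space \<Rightarrow> 'a \<Rightarrow> real \<Rightarrow> 'a" where
  "geod x y t = (THE z. \<exists>\<gamma>. geodesic_path x y \<gamma> \<and> \<gamma> t = z)"

definition boundedly_compact :: "'a::metric_space itself \<Rightarrow> bool" where
  "boundedly_compact _ \<longleftrightarrow> (\<forall>S::'a set. bounded S \<and> closed S \<longrightarrow> compact S)"

definition two_uniformly_convex :: "'a::metric_space itself \<Rightarrow> bool" where
  "two_uniformly_convex _ \<longleftrightarrow> (\<forall>x y z::'a. \<forall>t\<in>{0..1}.
     (dist z (geod x y t))\<^sup>2 \<le> (1 - t) * (dist z x)\<^sup>2 + t * (dist z y)\<^sup>2 - t * (1 - t) * (dist x y)\<^sup>2)"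

definition geod_convex_fun :: "('a::metric_space \<Rightarrow> real) \<Rightarrow> bool" where
  "geod_convex_fun f \<longleftrightarrow> (\<forall>x y. \<forall>t\<in>{0..1}. f (geod x y t) \<le> (1 - t) * f x + t * f y)"

definition lsc :: "('a::topological_space \<Rightarrow> real) \<Rightarrow> bool" where
  "lsc f \<longleftrightarrow> (\<forall>c. closed {x. f x \<le> c})"

definition prox2 :: "('a::metric_space \<Rightarrow> real) \<Rightarrow> real \<Rightarrow> 'a \<Rightarrow> 'a" where
  "prox2 f lam x = (THE y. \<forall>z. f y + (dist y x)\<^sup>2 / (2 * lam) \<le> f z + (dist z x)\<^sup>2 / (2 * lam))"

definition relaxed_prox :: "('a::metric_space \<Rightarrow> real) \<Rightarrow> real \<Rightarrow> real \<Rightarrow> 'a \<Rightarrow> 'a" where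
  "relaxed_prox f lam \<tau> x = geod x (prox2 f lam x) \<tau>"

definition psi22 :: "'a::metric_space \<Rightarrow> 'a \<Rightarrow> 'a \<Rightarrow> 'a \<Rightarrow> real" where
  "psi22 x y u v = (dist x u)\<^sup>2 + (dist y v)\<^sup>2 + (dist u v)\<^sup>2 + (dist x y)\<^sup>2
      - (dist y u)\<^sup>2 - (dist x v)\<^sup>2"

end

theory Submission
  imports Defs
begin


lemma geod_eq:
  assumes UG: "uniquely_geodesic TYPE('a::metric_space)" and g: "geodesic_path (x::'a) y \<gamma>"
    and t: "t \<in> {0..1}"
  shows "geod x y t = \<gamma> t"
  unfolding geod_def
proof (rule the_equality)
  show "\<exists>\<gamma>'. geodesic_path x y \<gamma>' \<and> \<gamma>' t = \<gamma> t" using g by blast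
next
  fix z assume "\<exists>\<delta>. geodesic_path x y \<delta> \<and> \<delta> t = z"
  then obtain \<delta> where d: "geodesic_path x y \<delta>" "\<delta> t = z" by blast
  from UG have "\<forall>t\<in>{0..1}. \<delta> t = \<gamma> t" unfolding uniquely_geodesic_def using d(1) g by blast
  then show "z = \<gamma> t" using d(2) t by auto
qed

lemma geod_exists:
  assumes UG: "uniquely_geodesic TYPE('a::metric_space)"
  shows "\<exists>\<gamma>. geodesic_path (x::'a) y \<gamma>"
  using UG unfolding uniquely_geodesic_def by blast

lemma geod_dist:
  assumes UG: "uniquely_geodesic TYPE('a::metric_space)" and s: "s \<in> {0..1}" and t: "t \<in> {0..1}"
  shows "dist (geod (x::'a) y s) (geod x y t) = \<bar>s - t\<bar> * dist x y"
proof -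
  obtain \<gamma> where g: "geodesic_path x y \<gamma>" using geod_exists[OF UG] by blast
  show ?thesis using geod_eq[OF UG g s] geod_eq[OF UG g t] g s t unfolding geodesic_path_def by auto
qed

lemma geod_0:
  assumes UG: "uniquely_geodesic TYPE('a::metric_space)"
  shows "geod (x::'a) y 0 = x"
proof -
  obtain \<gamma> where g: "geodesic_path x y \<gamma>" using geod_exists[OF UG] by blast
  show ?thesis using geod_eq[OF UG g] g unfolding geodesic_path_def by auto
qed

lemma geod_1:
  assumes UG: "uniquely_geodesic TYPE('a::metric_space)"
  shows "geod (x::'a) y 1 = y"
proof -
  obtain \<gamma> where g: "geodesic_path x y \<gamma>" using geod_exists[OF UG] by blast
  show ?thesis using geod_eq[OF UG g] g unfolding geodesic_path_def by auto
qed

lemma geod_dist0: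
  assumes UG: "uniquely_geodesic TYPE('a::metric_space)" and s: "s \<in> {0..1}"
  shows "dist (x::'a) (geod x y s) = s * dist x y"
  using geod_dist[OF UG _ s, of 0 x y] s by (simp add: geod_0[OF UG])

lemma geod_dist1:
  assumes UG: "uniquely_geodesic TYPE('a::metric_space)" and s: "s \<in> {0..1}"
  shows "dist (geod (x::'a) y s) y = (1 - s) * dist x y"
  using geod_dist[OF UG s, of 1 x y] s by (simp add: geod_1[OF UG])

lemma geod_sub:
  assumes UG: "uniquely_geodesic TYPE('a::metric_space)" and r: "r \<in> {0..1}" and s: "s \<in> {0..1}"
  shows "geod (x::'a) (geod x y s) r = geod x y (r * s)"
proof -
  obtain \<gamma> where g: "geodesic_path x y \<gamma>" using geod_exists[OF UG] by blast
  have gs: "geod x y s = \<gamma> s" using geod_eq[OF UG g s] .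
  have rs: "r * s \<in> {0..1}" using r s by (auto intro: mult_le_one)
  have dxs: "dist x (\<gamma> s) = s * dist x y"
    using g s unfolding geodesic_path_def by (metis atLeastAtMost_iff diff_0 abs_minus_cancel abs_of_nonneg order_refl zero_le_one)
  have "geodesic_path x (\<gamma> s) (\<lambda>r. \<gamma> (r * s))"
    unfolding geodesic_path_def
  proof (intro conjI ballI)
    show "\<gamma> (0 * s) = x" using g unfolding geodesic_path_def by simp
    show "\<gamma> (1 * s) = \<gamma> s" by simp
    fix a b :: real assume a: "a \<in> {0..1}" and b: "b \<in> {0..1}"
    have "a * s \<in> {0..1}" "b * s \<in> {0..1}" using a b s by (auto intro: mult_le_one)
    then have "dist (\<gamma> (a * s)) (\<gamma> (b * s)) = \<bar>a * s - b * s\<bar> * dist x y"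
      using g unfolding geodesic_path_def by blast
    also have "\<dots> = \<bar>a - b\<bar> * (s * dist x y)"
      using s by (simp add: left_diff_distrib[symmetric] abs_mult)
    finally show "dist (\<gamma> (a * s)) (\<gamma> (b * s)) = \<bar>a - b\<bar> * dist x (\<gamma> s)" using dxs by simp
  qed
  then have "geod x (\<gamma> s) r = \<gamma> (r * s)" using geod_eq[OF UG _ r] by blast
  then show ?thesis using gs geod_eq[OF UG g rs] by simp
qed

lemma quad_ineq:
  assumes UG: "uniquely_geodesic TYPE('a::metric_space)" and CN: "two_uniformly_convex TYPE('a)"
  shows "(dist (a::'a) c)\<^sup>2 + (dist b d)\<^sup>2 \<le> (dist a b)\<^sup>2 + (dist b c)\<^sup>2 + (dist c d)\<^sup>2 + (dist d a)\<^sup>2"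
proof -
  define m where "m = geod a c (1/2)"
  have h: "\<And>z. (dist z m)\<^sup>2 \<le> (1 - 1/2) * (dist z a)\<^sup>2 + (1/2) * (dist z c)\<^sup>2 - (1/2) * (1 - 1/2) * (dist a c)\<^sup>2"
  proof -
    fix z
    have "\<forall>t\<in>{0..1}. (dist z (geod a c t))\<^sup>2 \<le> (1 - t) * (dist z a)\<^sup>2 + t * (dist z c)\<^sup>2 - t * (1 - t) * (dist a c)\<^sup>2"
      using CN unfolding two_uniformly_convex_def by blast
    then show "?thesis z" unfolding m_def by (rule bspec) simp
  qed
  have tri: "dist b d \<le> dist b m + dist m d" by (rule dist_triangle)
  have "(dist b d)\<^sup>2 \<le> (dist b m + dist m d)\<^sup>2"
    using tri by (simp add: power_mono)
  also have "\<dots> \<le> 2 * (dist b m)\<^sup>2 + 2 * (dist m d)\<^sup>2"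
  proof -
    have "0 \<le> (dist b m - dist m d)\<^sup>2" by simp
    then show ?thesis by (simp add: power2_eq_square algebra_simps)
  qed
  finally have "(dist b d)\<^sup>2 \<le> 2 * (dist b m)\<^sup>2 + 2 * (dist m d)\<^sup>2" .
  moreover note h[of b] h[of d]
  ultimately show ?thesis by (simp add: dist_commute)
qed



lemma lsc_plus_cont_closed:
  fixes f g :: "'a::topological_space \<Rightarrow> real"
  assumes "lsc f" and g: "continuous_on UNIV g"
  shows "closed {z. f z + g z \<le> c}"
proof -
  have "open {z. c < f z + g z}"
  proof (subst open_subopen, intro ballI)
    fix z assume "z \<in> {z. c < f z + g z}"
    then have zc: "c < f z + g z" by simp
    define \<delta> where "\<delta> = (f z + g z - c) / 2"
    have dpos: "\<delta> > 0" using zc unfolding \<delta>_def by simp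
    define T where "T = {w. f z - \<delta> < f w} \<inter> {w. g z - \<delta> < g w}"
    have o1: "open {w. f z - \<delta> < f w}"
    proof -
      have "{w. f z - \<delta> < f w} = - {w. f w \<le> f z - \<delta>}" by auto
      then show ?thesis using assms(1) unfolding lsc_def by auto
    qed
    have o2: "open {w. g z - \<delta> < g w}"
      by (rule open_Collect_less) (auto intro: continuous_intros g)
    have "open T" unfolding T_def using o1 o2 by auto
    moreover have "z \<in> T" unfolding T_def using dpos by auto
    moreover have "T \<subseteq> {z. c < f z + g z}" unfolding T_def \<delta>_def by (auto simp: field_simps)
    ultimately show "\<exists>T. open T \<and> z \<in> T \<and> T \<subseteq> {z. c < f z + g z}" by blast
  qed
  moreover have "{z. f z + g z \<le> c} = - {z. c < f z + g z}" by auto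
  ultimately show ?thesis by (simp add: closed_def)
qed

lemma closed_sublevels_min:
  fixes F :: "'a::topological_space \<Rightarrow> real"
  assumes cl: "\<And>c. closed {z. F z \<le> c}" and K: "compact K" "K \<noteq> {}"
  shows "\<exists>p\<in>K. \<forall>z\<in>K. F p \<le> F z"
proof -
  define FF where "FF = (\<lambda>c. {z. F z \<le> c}) ` (F ` K)"
  have "K \<inter> \<Inter>FF \<noteq> {}"
  proof (rule compact_imp_fip[OF K(1)])
    show "\<And>T. T \<in> FF \<Longrightarrow> closed T" unfolding FF_def using cl by auto
    fix F' assume fin: "finite F'" and sub: "F' \<subseteq> FF"
    show "K \<inter> \<Inter> F' \<noteq> {}"
    proof (cases "F' = {}")
      case True then show ?thesis using K(2) by simp
    next
      case False
      obtain C where C: "C \<subseteq> F ` K" "finite C" "F' = (\<lambda>c. {z. F z \<le> c}) ` C"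
        using sub fin unfolding FF_def by (meson finite_subset_image)
      then have "C \<noteq> {}" using False by auto
      then have "Min C \<in> C" using C(2) by simp
      then obtain z where z: "z \<in> K" "F z = Min C" using C(1) by force
      have "\<forall>c\<in>C. F z \<le> c" using z C(2) by simp
      then have "z \<in> K \<inter> \<Inter> F'" using z(1) C(3) by auto
      then show ?thesis by blast
    qed
  qed
  then obtain p where p: "p \<in> K" "p \<in> \<Inter>FF" by blast
  then have "\<forall>z\<in>K. F p \<le> F z" unfolding FF_def by auto
  then show ?thesis using p(1) by blast
qed



lemma CN_inst:
  assumes CN: "two_uniformly_convex TYPE('a::metric_space)" and t: "t \<in> {0..1}"
  shows "(dist (z::'a) (geod x y t))\<^sup>2 \<le> (1 - t) * (dist z x)\<^sup>2 + t * (dist z y)\<^sup>2 - t * (1 - t) * (dist x y)\<^sup>2"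
  using CN t unfolding two_uniformly_convex_def by blast

lemma conv_inst:
  assumes "geod_convex_fun f" and t: "t \<in> {0..1}"
  shows "f (geod x y t) \<le> (1 - t) * f x + t * f y"
  using assms unfolding geod_convex_fun_def by blast

lemma limit_le:
  fixes a b c :: real
  assumes h: "\<And>t. 0 < t \<Longrightarrow> t \<le> 1 \<Longrightarrow> a \<le> b + t * c" and c: "c \<ge> 0"
  shows "a \<le> b"
proof (rule ccontr)
  assume "\<not> a \<le> b"
  then have e: "a - b > 0" by simp
  show False
  proof (cases "c = 0")
    case True then show False using h[of 1] e by simp
  next
    case False
    then have cp: "c > 0" using c by simp
    show False
    proof (cases "(a - b) / (2 * c) \<le> 1")
      case True
      have t0: "0 < (a - b) / (2 * c)" using e cp by simp
      have "a \<le> b + ((a - b) / (2 * c)) * c" using h[OF t0 True] .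
      moreover have "((a - b) / (2 * c)) * c = (a - b) / 2" using cp by simp
      ultimately show False using e by simp
    next
      case False
      have "a \<le> b + c" using h[of 1] by simp
      then show False using False e cp by (simp add: field_simps)
    qed
  qed
qed

locale proxsetting =
  fixes f :: "'a::metric_space \<Rightarrow> real" and lam :: real
  assumes UG: "uniquely_geodesic TYPE('a)"
    and CN: "two_uniformly_convex TYPE('a)"
    and BC: "boundedly_compact TYPE('a)"
    and cvx: "geod_convex_fun f" and lscf: "lsc f"
    and lam: "lam > 0"
begin

definition F :: "'a \<Rightarrow> 'a \<Rightarrow> real" where
  "F x z = f z + (dist z x)\<^sup>2 / (2 * lam)"

lemma F_closed: "closed {z. F x z \<le> c}"
  unfolding F_def
  by (rule lsc_plus_cont_closed[OF lscf]) (use lam in \<open>auto intro!: continuous_intros\<close>)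

lemma F_scaled: "2 * lam * F x z = 2 * lam * f z + (dist z x)\<^sup>2"
  using lam unfolding F_def by (simp add: algebra_simps)

lemma F_le_scaled: "F x a \<le> F x b \<Longrightarrow> 2 * lam * f a + (dist a x)\<^sup>2 \<le> 2 * lam * f b + (dist b x)\<^sup>2"
  using mult_left_mono[of "F x a" "F x b" "2 * lam"] lam F_scaled by simp

lemma cball_compact: "compact (cball (x::'a) r)"
  using BC unfolding boundedly_compact_def by auto

lemma F_unique:
  assumes p: "\<forall>z. F x p \<le> F x z" and p': "\<forall>z. F x p' \<le> F x z"
  shows "p' = p"
proof -
  define w where "w = geod p p' (1/2)"
  have h: "(1/2::real) \<in> {0..1}" by simp
  have fw: "f w \<le> (1 - 1/2) * f p + (1/2) * f p'" unfolding w_def using conv_inst[OF cvx h] .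
  have dw: "(dist x w)\<^sup>2 \<le> (1 - 1/2) * (dist x p)\<^sup>2 + (1/2) * (dist x p')\<^sup>2 - (1/2) * (1 - 1/2) * (dist p p')\<^sup>2"
    unfolding w_def using CN_inst[OF CN h] .
  have "F x p \<le> F x w" using p by simp
  note g1 = F_le_scaled[OF this]
  have "F x p' \<le> F x p" using p' by simp
  note g2 = F_le_scaled[OF this]
  have "F x p \<le> F x p'" using p by simp
  note g3 = F_le_scaled[OF this]
  have "2 * lam * f w \<le> 2 * lam * ((1 - 1/2) * f p + (1/2) * f p')"
    using fw lam by (intro mult_left_mono) auto
  also have "\<dots> = (1/2) * (2 * lam * f p) + (1/2) * (2 * lam * f p')" by (simp add: algebra_simps)
  finally have g4: "2 * lam * f w \<le> (1/2) * (2 * lam * f p) + (1/2) * (2 * lam * f p')" .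
  have dw': "(dist w x)\<^sup>2 \<le> (1/2) * (dist p x)\<^sup>2 + (1/2) * (dist p' x)\<^sup>2 - (1/4) * (dist p p')\<^sup>2"
    using dw by (simp add: dist_commute)
  have "(dist p p')\<^sup>2 \<le> 0" using g1 g2 g3 g4 dw' by linarith
  then show ?thesis by simp
qed

lemma F_exists: "\<exists>p. \<forall>z. F x p \<le> F x z"
proof -
  obtain w0 where w0: "w0 \<in> cball x 1" "\<forall>z\<in>cball x 1. f w0 \<le> f z"
    using closed_sublevels_min[of f "cball x 1"] lscf cball_compact[of x 1] unfolding lsc_def by force
  define L where "L = f x - f w0"
  have L0: "L \<ge> 0" using w0(2) unfolding L_def by simp
  have lower: "f z \<ge> f x - L * dist x z" if z: "dist x z \<ge> 1" for z
  proof -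
    define r where "r = dist x z"
    define t where "t = 1 / r"
    have r1: "r \<ge> 1" using z r_def by simp
    have t: "t \<in> {0..1}" unfolding t_def using r1 by simp
    define w where "w = geod x z t"
    have "dist x w = t * r" unfolding w_def r_def using geod_dist0[OF UG t] by simp
    then have "dist x w = 1" unfolding t_def using r1 by simp
    then have "f w0 \<le> f w" using w0(2) by simp
    also have "f w \<le> (1 - t) * f x + t * f z" unfolding w_def using conv_inst[OF cvx t] .
    finally have "r * f w0 \<le> r * ((1 - t) * f x + t * f z)" using r1 by simp
    moreover have rt: "r * t = 1" using r1 by (simp add: t_def)
    moreover have "r * ((1 - t) * f x + t * f z) = r * f x - (r * t) * f x + (r * t) * f z"
      by (simp add: algebra_simps)
    ultimately have "r * f w0 \<le> (r - 1) * f x + f z" by (simp add: algebra_simps)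
    then show ?thesis unfolding L_def r_def by (simp add: algebra_simps)
  qed
  define R where "R = 1 + 2 * lam * L"
  have R1: "R \<ge> 1" unfolding R_def using lam L0 by simp
  obtain p where p: "p \<in> cball x R" "\<forall>z\<in>cball x R. F x p \<le> F x z"
    using closed_sublevels_min[of "F x" "cball x R"] F_closed cball_compact[of x R] R1 by force
  have "F x p \<le> F x z" for z
  proof (cases "z \<in> cball x R")
    case True then show ?thesis using p by simp
  next
    case False
    define r where "r = dist x z"
    have rR: "r > R" using False r_def by simp
    have fz: "f z \<ge> f x - L * r" using lower[of z] rR R1 r_def by simp
    have lL: "2 * lam * L \<ge> 0" using lam L0 by simp
    have "r > 0" "r - 2 * lam * L > 0" using rR lL unfolding R_def by linarith+
    then have "r * (r - 2 * lam * L) > 0" by simp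
    then have "r\<^sup>2 / (2 * lam) - L * r > 0" using lam by (simp add: field_simps power2_eq_square)
    then have "F x z > f x" unfolding F_def using fz r_def by (simp add: dist_commute)
    moreover have "F x x = f x" unfolding F_def by simp
    moreover have "F x p \<le> F x x" using p R1 by simp
    ultimately show ?thesis by simp
  qed
  then show ?thesis by blast
qed

lemma prox_min: "\<forall>z. F x (prox2 f lam x) \<le> F x z"
proof -
  obtain p where p: "\<forall>z. F x p \<le> F x z" using F_exists by blast
  have "prox2 f lam x = p"
    unfolding prox2_def
  proof (rule the_equality)
    show "\<forall>z. f p + (dist p x)\<^sup>2 / (2 * lam) \<le> f z + (dist z x)\<^sup>2 / (2 * lam)" using p unfolding F_def .
    fix y assume "\<forall>z. f y + (dist y x)\<^sup>2 / (2 * lam) \<le> f z + (dist z x)\<^sup>2 / (2 * lam)"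
    then show "y = p" using F_unique[OF p] unfolding F_def by blast
  qed
  then show ?thesis using p by simp
qed

lemma prox_var:
  assumes pdef: "p = prox2 f lam x"
  shows "2 * lam * (f p - f z) + (dist p x)\<^sup>2 + (dist p z)\<^sup>2 \<le> (dist z x)\<^sup>2"
proof -
  define A where "A = 2 * lam * f p + (dist p x)\<^sup>2"
  define B where "B = 2 * lam * f z + (dist z x)\<^sup>2"
  have "A \<le> B - (dist p z)\<^sup>2 + t * (dist p z)\<^sup>2" if t0: "0 < t" and t1: "t \<le> 1" for t
  proof -
    have t: "t \<in> {0..1}" using t0 t1 by simp
    define w where "w = geod p z t"
    have "F x p \<le> F x w" using prox_min pdef by simp
    then have e1: "A \<le> 2 * lam * f w + (dist w x)\<^sup>2" unfolding A_def by (rule F_le_scaled)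
    have e2: "f w \<le> (1 - t) * f p + t * f z" unfolding w_def using conv_inst[OF cvx t] .
    have e3: "(dist x w)\<^sup>2 \<le> (1 - t) * (dist x p)\<^sup>2 + t * (dist x z)\<^sup>2 - t * (1 - t) * (dist p z)\<^sup>2"
      unfolding w_def using CN_inst[OF CN t] .
    have "A \<le> (1 - t) * A + t * B - t * (1 - t) * (dist p z)\<^sup>2"
    proof -
      have "2 * lam * f w \<le> 2 * lam * ((1 - t) * f p + t * f z)" using e2 lam by simp
      then show ?thesis using e1 e3 unfolding A_def B_def by (simp add: dist_commute algebra_simps)
    qed
    then have "t * A \<le> t * (B - (dist p z)\<^sup>2 + t * (dist p z)\<^sup>2)" by (simp add: algebra_simps)
    then show ?thesis using t0 by simp
  qed
  then have "A \<le> B - (dist p z)\<^sup>2" by (intro limit_le[of A "B - (dist p z)\<^sup>2" "(dist p z)\<^sup>2"]) auto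
  then show ?thesis unfolding A_def B_def by (simp add: algebra_simps)
qed

lemma prox_fne:
  assumes "p = prox2 f lam x" "q = prox2 f lam y"
  shows "(dist p x)\<^sup>2 + (dist q y)\<^sup>2 + 2 * (dist p q)\<^sup>2 \<le> (dist q x)\<^sup>2 + (dist p y)\<^sup>2"
proof -
  have "2 * lam * (f p - f q) + 2 * lam * (f q - f p) = 0" by algebra
  then show ?thesis using prox_var[OF assms(1), of q] prox_var[OF assms(2), of p] by (simp add: dist_commute)
qed

end



lemma cert:
  fixes \<tau> a b c e X Y g h k m1 m2 n1 n2 :: real
  assumes t0: "0 < \<tau>" and t1: "\<tau> \<le> 1/2"
    and C1: "(1-\<tau>)*k \<le> (1-2*\<tau>)*h + \<tau>*m1 - \<tau>*(1-2*\<tau>)*(1-\<tau>)*X"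
    and C1': "(1-\<tau>)*k \<le> (1-2*\<tau>)*g + \<tau>*m2 - \<tau>*(1-2*\<tau>)*(1-\<tau>)*Y"
    and C2: "n1 \<le> \<tau>*b + (1-\<tau>)*e - \<tau>*(1-\<tau>)*X"
    and C2': "n2 \<le> \<tau>*c + (1-\<tau>)*e - \<tau>*(1-\<tau>)*Y"
    and FN: "X + Y + 2*e \<le> b + c"
    and P: "0 \<le> \<tau>\<^sup>2*X + \<tau>\<^sup>2*Y + k + a - g - h"
    and Q: "0 \<le> (1-\<tau>)\<^sup>2*X + n1 + (1-\<tau>)\<^sup>2*Y + h - b - m1"
    and Q': "0 \<le> (1-\<tau>)\<^sup>2*Y + n2 + (1-\<tau>)\<^sup>2*X + g - c - m2"
  shows "k \<le> (1-2*\<tau>)*a - \<tau>^3*(X+Y) + \<tau>*(g+h)"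
proof -
  define G1 where "G1 = (1-2*\<tau>)*h + \<tau>*m1 - \<tau>*(1-2*\<tau>)*(1-\<tau>)*X - (1-\<tau>)*k"
  define G1' where "G1' = (1-2*\<tau>)*g + \<tau>*m2 - \<tau>*(1-2*\<tau>)*(1-\<tau>)*Y - (1-\<tau>)*k"
  define G2 where "G2 = \<tau>*b + (1-\<tau>)*e - \<tau>*(1-\<tau>)*X - n1"
  define G2' where "G2' = \<tau>*c + (1-\<tau>)*e - \<tau>*(1-\<tau>)*Y - n2"
  define FF where "FF = b + c - X - Y - 2*e"
  define PP where "PP = \<tau>\<^sup>2*X + \<tau>\<^sup>2*Y + k + a - g - h"
  define QQ where "QQ = (1-\<tau>)\<^sup>2*X + n1 + (1-\<tau>)\<^sup>2*Y + h - b - m1"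
  define QQ' where "QQ' = (1-\<tau>)\<^sup>2*Y + n2 + (1-\<tau>)\<^sup>2*X + g - c - m2"
  have id: "(1-2*\<tau>)*a - \<tau>^3*(X+Y) + \<tau>*(g+h) - k
      = G1 + G1' + \<tau>*(G2 + G2') + \<tau>*(1-\<tau>)*FF + (1-2*\<tau>)*PP + \<tau>*(QQ + QQ')"
    unfolding G1_def G1'_def G2_def G2'_def FF_def PP_def QQ_def QQ'_def
    by (simp add: algebra_simps power2_eq_square power3_eq_cube)
  have "G1 \<ge> 0" "G1' \<ge> 0" "G2 + G2' \<ge> 0" "FF \<ge> 0" "PP \<ge> 0" "QQ + QQ' \<ge> 0"
    unfolding G1_def G1'_def G2_def G2'_def FF_def PP_def QQ_def QQ'_def
    using C1 C1' C2 C2' FN P Q Q' by linarith+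
  moreover have "\<tau> \<ge> 0" "\<tau>*(1-\<tau>) \<ge> 0" "1-2*\<tau> \<ge> 0" using t0 t1 by auto
  ultimately have "G1 + G1' + \<tau>*(G2 + G2') + \<tau>*(1-\<tau>)*FF + (1-2*\<tau>)*PP + \<tau>*(QQ + QQ') \<ge> 0"
    by (simp add: add_nonneg_nonneg mult_nonneg_nonneg)
  then show ?thesis using id by linarith
qed



theorem mainTheorem15:
  fixes f :: "'a::metric_space \<Rightarrow> real" and lam \<tau> :: real
  assumes "uniquely_geodesic TYPE('a)"
    and "two_uniformly_convex TYPE('a)"
    and "boundedly_compact TYPE('a)"
    and "geod_convex_fun f" and "lsc f"
    and "lam > 0" and "0 < \<tau>" and "\<tau> \<le> 1/2"
  shows "\<forall>x y. (dist (relaxed_prox f lam \<tau> x) (relaxed_prox f lam \<tau> y))\<^sup>2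
     \<le> (dist x y)\<^sup>2 - \<tau> / (1 - \<tau>) * psi22 x y (relaxed_prox f lam \<tau> x) (relaxed_prox f lam \<tau> y)"
proof (intro allI)
  fix x y :: 'a
  note UG = assms(1) and CN = assms(2)
  interpret proxsetting f lam using assms by (unfold_locales) auto
  define p where "p = prox2 f lam x"
  define q where "q = prox2 f lam y"
  define u where "u = geod x p \<tau>"
  define v where "v = geod y q \<tau>"
  define u' where "u' = geod x p (1 - \<tau>)"
  define v' where "v' = geod y q (1 - \<tau>)"
  have tau: "\<tau> \<in> {0..1}" "1 - \<tau> \<in> {0..1}" using assms(7,8) by auto
  have ru: "relaxed_prox f lam \<tau> x = u" "relaxed_prox f lam \<tau> y = v"
    unfolding relaxed_prox_def u_def v_def p_def q_def by auto
  have dxu: "dist x u = \<tau> * dist x p" unfolding u_def using geod_dist0[OF UG tau(1)] .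
  have dyv: "dist y v = \<tau> * dist y q" unfolding v_def using geod_dist0[OF UG tau(1)] .
  have dxu': "dist x u' = (1 - \<tau>) * dist x p" unfolding u'_def using geod_dist0[OF UG tau(2)] .
  have dyv': "dist y v' = (1 - \<tau>) * dist y q" unfolding v'_def using geod_dist0[OF UG tau(2)] .
  have dvq: "dist v q = (1 - \<tau>) * dist y q" unfolding v_def using geod_dist1[OF UG tau(1)] .
  have dup: "dist u p = (1 - \<tau>) * dist x p" unfolding u_def using geod_dist1[OF UG tau(1)] .
  define t where "t = \<tau> / (1 - \<tau>)"
  have tt: "t \<in> {0..1}" unfolding t_def using assms(7,8) by auto
  have t1: "t * (1 - \<tau>) = \<tau>" unfolding t_def using assms(8) by simp
  have sub_u: "geod x u' t = u" unfolding u'_def u_def using geod_sub[OF UG tt tau(2)] t1 by simp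
  have sub_v: "geod y v' t = v" unfolding v'_def v_def using geod_sub[OF UG tt tau(2)] t1 by simp
  have cn1: "(dist v u)\<^sup>2 \<le> (1 - t) * (dist v x)\<^sup>2 + t * (dist v u')\<^sup>2 - t * (1 - t) * (dist x u')\<^sup>2"
    using CN_inst[OF CN tt, of v x u'] sub_u by simp
  have cn1': "(dist u v)\<^sup>2 \<le> (1 - t) * (dist u y)\<^sup>2 + t * (dist u v')\<^sup>2 - t * (1 - t) * (dist y v')\<^sup>2"
    using CN_inst[OF CN tt, of u y v'] sub_v by simp
  have scale: "(1 - \<tau>) * ((1 - t) * A + t * B - t * (1 - t) * ((1 - \<tau>) * C)\<^sup>2)
      = (1 - 2*\<tau>) * A + \<tau> * B - \<tau> * (1 - 2*\<tau>) * (1 - \<tau>) * C\<^sup>2" for A B C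
  proof -
    have t2: "(1 - t) * (1 - \<tau>) = 1 - 2*\<tau>" using t1 by (simp add: algebra_simps)
    have "(1 - \<tau>) * ((1 - t) * A + t * B - t * (1 - t) * ((1 - \<tau>) * C)\<^sup>2)
      = ((1 - t) * (1 - \<tau>)) * A + (t * (1 - \<tau>)) * B - (t * (1 - \<tau>)) * ((1 - t) * (1 - \<tau>)) * (1 - \<tau>) * C\<^sup>2"
      by (simp add: algebra_simps power2_eq_square)
    then show ?thesis unfolding t1 t2 .
  qed
  have C1: "(1-\<tau>)*(dist u v)\<^sup>2 \<le> (1-2*\<tau>)*(dist x v)\<^sup>2 + \<tau>*(dist u' v)\<^sup>2 - \<tau>*(1-2*\<tau>)*(1-\<tau>)*(dist x p)\<^sup>2"
  proof -
    have "(1-\<tau>)*(dist v u)\<^sup>2 \<le> (1-\<tau>)*((1 - t) * (dist v x)\<^sup>2 + t * (dist v u')\<^sup>2 - t * (1 - t) * ((1 - \<tau>) * dist x p)\<^sup>2)"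
      using cn1 dxu' assms(8) by (intro mult_left_mono) auto
    then show ?thesis unfolding scale by (simp add: dist_commute)
  qed
  have C1': "(1-\<tau>)*(dist u v)\<^sup>2 \<le> (1-2*\<tau>)*(dist y u)\<^sup>2 + \<tau>*(dist u v')\<^sup>2 - \<tau>*(1-2*\<tau>)*(1-\<tau>)*(dist y q)\<^sup>2"
  proof -
    have "(1-\<tau>)*(dist u v)\<^sup>2 \<le> (1-\<tau>)*((1 - t) * (dist u y)\<^sup>2 + t * (dist u v')\<^sup>2 - t * (1 - t) * ((1 - \<tau>) * dist y q)\<^sup>2)"
      using cn1' dyv' assms(8) by (intro mult_left_mono) auto
    then show ?thesis unfolding scale by (simp add: dist_commute)
  qed
  have C2: "(dist q u')\<^sup>2 \<le> \<tau>*(dist x q)\<^sup>2 + (1-\<tau>)*(dist p q)\<^sup>2 - \<tau>*(1-\<tau>)*(dist x p)\<^sup>2"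
    using CN_inst[OF CN tau(2), of q x p] unfolding u'_def by (simp add: dist_commute algebra_simps)
  have C2': "(dist p v')\<^sup>2 \<le> \<tau>*(dist y p)\<^sup>2 + (1-\<tau>)*(dist p q)\<^sup>2 - \<tau>*(1-\<tau>)*(dist y q)\<^sup>2"
    using CN_inst[OF CN tau(2), of p y q] unfolding v'_def by (simp add: dist_commute algebra_simps)
  have FN: "(dist x p)\<^sup>2 + (dist y q)\<^sup>2 + 2*(dist p q)\<^sup>2 \<le> (dist x q)\<^sup>2 + (dist y p)\<^sup>2"
    using prox_fne[OF p_def q_def] by (simp add: dist_commute)
  have P: "0 \<le> \<tau>\<^sup>2*(dist x p)\<^sup>2 + \<tau>\<^sup>2*(dist y q)\<^sup>2 + (dist u v)\<^sup>2 + (dist x y)\<^sup>2 - (dist y u)\<^sup>2 - (dist x v)\<^sup>2"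
    using quad_ineq[OF UG CN, of x v u y] dxu dyv by (simp add: dist_commute power_mult_distrib)
  have Q: "0 \<le> (1-\<tau>)\<^sup>2*(dist x p)\<^sup>2 + (dist q u')\<^sup>2 + (1-\<tau>)\<^sup>2*(dist y q)\<^sup>2 + (dist x v)\<^sup>2 - (dist x q)\<^sup>2 - (dist u' v)\<^sup>2"
    using quad_ineq[OF UG CN, of x q u' v] dxu' dvq by (simp add: dist_commute power_mult_distrib)
  have Q': "0 \<le> (1-\<tau>)\<^sup>2*(dist y q)\<^sup>2 + (dist p v')\<^sup>2 + (1-\<tau>)\<^sup>2*(dist x p)\<^sup>2 + (dist y u)\<^sup>2 - (dist y p)\<^sup>2 - (dist u v')\<^sup>2"
    using quad_ineq[OF UG CN, of y p v' u] dyv' dup by (simp add: dist_commute power_mult_distrib)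
  have main: "(dist u v)\<^sup>2 \<le> (1-2*\<tau>)*(dist x y)\<^sup>2 - \<tau>^3*((dist x p)\<^sup>2+(dist y q)\<^sup>2) + \<tau>*((dist y u)\<^sup>2+(dist x v)\<^sup>2)"
    by (rule cert[OF assms(7,8) C1 C1' C2 C2' FN P Q Q'])
  have psi: "psi22 x y u v = \<tau>\<^sup>2*(dist x p)\<^sup>2 + \<tau>\<^sup>2*(dist y q)\<^sup>2 + (dist u v)\<^sup>2 + (dist x y)\<^sup>2 - (dist y u)\<^sup>2 - (dist x v)\<^sup>2"
    unfolding psi22_def using dxu dyv by (simp add: power_mult_distrib)
  have "(1-\<tau>) * (dist u v)\<^sup>2 \<le> (1-\<tau>) * ((dist x y)\<^sup>2 - \<tau> / (1 - \<tau>) * psi22 x y u v)"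
  proof -
    have "(1-\<tau>) * ((dist x y)\<^sup>2 - \<tau> / (1 - \<tau>) * psi22 x y u v) = (1-\<tau>) * (dist x y)\<^sup>2 - \<tau> * psi22 x y u v"
      using assms(8) by (simp add: field_simps)
    then show ?thesis using main unfolding psi by (simp add: algebra_simps power2_eq_square power3_eq_cube)
  qed
  then have "(dist u v)\<^sup>2 \<le> (dist x y)\<^sup>2 - \<tau> / (1 - \<tau>) * psi22 x y u v"
    using assms(8) by simp
  then show "(dist (relaxed_prox f lam \<tau> x) (relaxed_prox f lam \<tau> y))\<^sup>2
     \<le> (dist x y)\<^sup>2 - \<tau> / (1 - \<tau>) * psi22 x y (relaxed_prox f lam \<tau> x) (relaxed_prox f lam \<tau> y)"
    unfolding ru .
qed


end
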